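(* Let $\mathcal F\subset\mathcal F_X$ be a convex set of feasible environments. For each decision rule $p$ and each history $h$, $$\inf_{F\in\mathcal F(h)}\frac{U_p(F,h)}{V(F,h)}=\inf_{F\in\mathcal F}\frac{U_p(F,h)}{V(F,h)}.$$
   Context: Sequential search model. Fix a discount factor $\delta\in(0,1)$, a Borel set $X\subset\mathbb{R}_+$ with $0\in X$, and an outside option $x_0>0$. Let $\mathcal F_X$ be the set of Borel probability distributions on $X$ with finite mean ("environments"). A history is $h_t=(x_0,x_1,\dots,x_t)$, $t\ge0$, $x_i\in X$, with best-so-far alternative $y_t=\max\{x_0,\dots,x_t\}$. A decision rule $p$ assigns to each history $h$ a stopping probability $p(h)\in[0,1]$. Given any environment $F$ and a history $h_t$, future alternatives $x_{t+1},x_{t+2},\dots$ are i.i.d. with law $F$; at each round $s\ge t$ the individual stops with probability $p(h_s)$, and stopping at round $s$ yields $\delta^{s-t}y_s$ (never stopping yields $0$). $U_p(F,h)$ is this expected payoff (defined for every $F$, whether or not consistent with $h$), and $V(F,h)=\sup_pU_p(F,h)$. An environment $F$ is consistent with $h_t$ if the sequence $x_1,\dots,x_t$ occurs with positive probability under $F$; $\mathcal F(h)$ is the set of environments in $\mathcal F$ consistent with $h$. *)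

theory Defs
  imports "HOL-Probability.Probability"
begin

definition environments :: "real set \<Rightarrow> real measure set" where
  "environments X = {F. sets F = sets borel \<and> prob_space F \<and>
      emeasure F (UNIV - X) = 0 \<and> integrable F (\<lambda>x. x)}"

definition best :: "real list \<Rightarrow> real" where
  "best h = Max (set h)"

definition decision_rule :: "(real list \<Rightarrow> real) \<Rightarrow> bool" where
  "decision_rule p \<longleftrightarrow> (\<forall>h. 0 \<le> p h \<and> p h \<le> 1)"

text \<open>Realised expected (over the randomisation of the rule) discounted payoff, given
  history h and the stream w of future alternatives x_{t+1}, x_{t+2}, ...:
  stopping at round t+k happens with probability p(h_{t+k}) times the product of
  the continuation probabilities before, and yields delta^k * y_{t+k}.\<close>
definition stop_payoff ::
  "real \<Rightarrow> (real list \<Rightarrow> real) \<Rightarrow> real list \<Rightarrow> real stream \<Rightarrow> ennreal" where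
  "stop_payoff \<delta> p h w = (\<Sum>k. ennreal (\<delta> ^ k * best (h @ stake k w) * p (h @ stake k w)
        * (\<Prod>j<k. 1 - p (h @ stake j w))))"

definition U :: "real \<Rightarrow> (real list \<Rightarrow> real) \<Rightarrow> real measure \<Rightarrow> real list \<Rightarrow> ennreal" where
  "U \<delta> p F h = (\<integral>\<^sup>+ w. stop_payoff \<delta> p h w \<partial>(stream_space F))"

definition V :: "real \<Rightarrow> real measure \<Rightarrow> real list \<Rightarrow> ennreal" where
  "V \<delta> F h = (SUP p \<in> {p. decision_rule p}. U \<delta> p F h)"

text \<open>F is consistent with h = [x0, x1, ..., xt] iff x1,...,xt occurs with positive
  probability under i.i.d. draws from F, i.e. each x_i is an atom of F.\<close>
definition consistent :: "real measure \<Rightarrow> real list \<Rightarrow> bool" where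
  "consistent F h \<longleftrightarrow> (\<Prod>x\<leftarrow>tl h. emeasure F {x}) > 0"

definition mix :: "real \<Rightarrow> real measure \<Rightarrow> real measure \<Rightarrow> real measure" where
  "mix a F G = measure_of UNIV (sets borel)
     (\<lambda>A. ennreal a * emeasure F A + ennreal (1 - a) * emeasure G A)"

definition convex_envs :: "real measure set \<Rightarrow> bool" where
  "convex_envs \<F> \<longleftrightarrow> (\<forall>F\<in>\<F>. \<forall>G\<in>\<F>. \<forall>a\<in>{0..1}. mix a F G \<in> \<F>)"

end

theory Submission
  imports Defs
begin

lemma lower_int_le:
  assumes "\<And>g. g \<in> borel_measurable M \<Longrightarrow> (\<And>x. g x \<le> f x) \<Longrightarrow> integral\<^sup>N M g \<le> c"
  shows "integral\<^sup>N M f \<le> c"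
  unfolding nn_integral_def
proof (rule SUP_least)
  fix g assume "g \<in> {g. simple_function M g \<and> g \<le> f}"
  then have g: "simple_function M g" "g \<le> f" by auto
  have "integral\<^sup>S M g = integral\<^sup>N M g" using nn_integral_eq_simple_integral[OF g(1)] by simp
  also have "\<dots> \<le> c" using assms[of g] g borel_measurable_simple_function[OF g(1)] by (auto simp: le_fun_def)
  finally show "integral\<^sup>S M g \<le> c" .
qed

lemma lower_int_mult_le:
  assumes "\<And>g. g \<in> borel_measurable M \<Longrightarrow> (\<And>x. g x \<le> f x) \<Longrightarrow> c * integral\<^sup>N M g \<le> X"
  shows "c * integral\<^sup>N M f \<le> X"
  unfolding nn_integral_def SUP_mult_left_ennreal
proof (rule SUP_least)
  fix g assume "g \<in> {g. simple_function M g \<and> g \<le> f}"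
  then have g: "simple_function M g" "g \<le> f" by auto
  have "c * integral\<^sup>S M g = c * integral\<^sup>N M g" using nn_integral_eq_simple_integral[OF g(1)] by simp
  also have "\<dots> \<le> X" using assms[of g] g borel_measurable_simple_function[OF g(1)] by (auto simp: le_fun_def)
  finally show "c * integral\<^sup>S M g \<le> X" .
qed

lemma lower_int_add_le:
  assumes "\<And>g. g \<in> borel_measurable M \<Longrightarrow> (\<And>x. g x \<le> f x) \<Longrightarrow> integral\<^sup>N M g + c \<le> X"
  shows "integral\<^sup>N M f + c \<le> X"
proof -
  have ne: "{g. simple_function M g \<and> g \<le> f} \<noteq> {}"
  proof -
    have "(\<lambda>_. 0) \<in> {g. simple_function M g \<and> g \<le> f}" by (auto simp: le_fun_def)
    then show ?thesis by blast
  qed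
  show ?thesis
  unfolding nn_integral_def ennreal_SUP_add_left[OF ne, symmetric]
  proof (rule SUP_least)
    fix g assume "g \<in> {g. simple_function M g \<and> g \<le> f}"
    then have g: "simple_function M g" "g \<le> f" by auto
    have "integral\<^sup>S M g + c = integral\<^sup>N M g + c" using nn_integral_eq_simple_integral[OF g(1)] by simp
    also have "\<dots> \<le> X" using assms[of g] g borel_measurable_simple_function[OF g(1)] by (auto simp: le_fun_def)
    finally show "integral\<^sup>S M g + c \<le> X" .
  qed
qed

lemma lower_int_subadd:
  assumes v: "v \<in> borel_measurable M"
  shows "(\<integral>\<^sup>+x. u x + v x \<partial>M) \<le> integral\<^sup>N M u + integral\<^sup>N M v"
proof (rule lower_int_le)
  fix g assume g: "g \<in> borel_measurable M" and le: "\<And>x. g x \<le> u x + v x"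
  define d where "d = (\<lambda>x. if v x = \<top> then 0 else g x - v x)"
  have dm: "d \<in> borel_measurable M" unfolding d_def using g v by measurable
  have "integral\<^sup>N M g \<le> (\<integral>\<^sup>+x. d x + v x \<partial>M)"
  proof (rule nn_integral_mono)
    fix x show "g x \<le> d x + v x"
      unfolding d_def using diff_add_self_ennreal[of "g x" "v x"] by (auto split: if_splits)
  qed
  also have "\<dots> = integral\<^sup>N M d + integral\<^sup>N M v" using dm v by (rule nn_integral_add)
  also have "integral\<^sup>N M d \<le> integral\<^sup>N M u"
  proof (rule nn_integral_mono)
    fix x show "d x \<le> u x"
      unfolding d_def using le[of x] by (auto simp: ennreal_minus_le_iff add.commute top_unique)
  qed
  finally show "integral\<^sup>N M g \<le> integral\<^sup>N M u + integral\<^sup>N M v" by (simp add: add_right_mono)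
qed

lemma (in prob_space) nn_integral_stream_shift:
  assumes "g \<in> borel_measurable (stream_space M)"
  shows "(\<integral>\<^sup>+w. g w \<partial>stream_space M) =
    (\<integral>\<^sup>+w. \<integral>\<^sup>+v. g (stake K w @- v) \<partial>stream_space M \<partial>stream_space M)"
  using assms
proof (induction K arbitrary: g)
  case 0
  interpret S: prob_space "stream_space M" by (rule prob_space_stream_space)
  show ?case by (simp add: S.emeasure_space_1)
next
  case (Suc K)
  interpret S: prob_space "stream_space M" by (rule prob_space_stream_space)
  note [measurable] = Suc.prems
  have m1: "(\<lambda>w. \<integral>\<^sup>+v. g (stake (Suc K) w @- v) \<partial>stream_space M) \<in> borel_measurable (stream_space M)"
    by (rule S.borel_measurable_nn_integral) measurable
  have "(\<integral>\<^sup>+w. \<integral>\<^sup>+v. g (stake (Suc K) w @- v) \<partial>stream_space M \<partial>stream_space M)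
     = (\<integral>\<^sup>+x. \<integral>\<^sup>+w. \<integral>\<^sup>+v. g (stake (Suc K) (x ## w) @- v) \<partial>stream_space M \<partial>stream_space M \<partial>M)"
    by (rule nn_integral_stream_space[OF m1])
  also have "\<dots> = (\<integral>\<^sup>+x. \<integral>\<^sup>+w. \<integral>\<^sup>+v. g (x ## (stake K w @- v)) \<partial>stream_space M \<partial>stream_space M \<partial>M)"
    by simp
  also have "\<dots> = (\<integral>\<^sup>+x. \<integral>\<^sup>+u. g (x ## u) \<partial>stream_space M \<partial>M)"
  proof (rule nn_integral_cong)
    fix x assume x: "x \<in> space M"
    have "(\<lambda>u. g (x ## u)) \<in> borel_measurable (stream_space M)" using x by measurable
    from Suc.IH[OF this] show "(\<integral>\<^sup>+w. \<integral>\<^sup>+v. g (x ## (stake K w @- v)) \<partial>stream_space M \<partial>stream_space M)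
        = (\<integral>\<^sup>+u. g (x ## u) \<partial>stream_space M)" by simp
  qed
  also have "\<dots> = (\<integral>\<^sup>+w. g w \<partial>stream_space M)"
    by (rule nn_integral_stream_space[symmetric]) measurable
  finally show ?case ..
qed

lemma (in prob_space) avg_prefix:
  assumes g: "g \<in> borel_measurable (stream_space M)"
    and dep0: "\<forall>w w'. stake K w = stake K w' \<longrightarrow> f w = f w'"
    and le: "\<And>w. g w \<le> f w"
  defines "g' \<equiv> \<lambda>w. \<integral>\<^sup>+v. g (stake K w @- v) \<partial>stream_space M"
  shows "g' \<in> borel_measurable (stream_space M)" "\<And>w. g' w \<le> f w"
    "\<And>w w'. stake K w = stake K w' \<Longrightarrow> g' w = g' w'"
    "integral\<^sup>N (stream_space M) g' = integral\<^sup>N (stream_space M) g"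
proof -
  interpret S: prob_space "stream_space M" by (rule prob_space_stream_space)
  have dep: "\<And>w w'. stake K w = stake K w' \<Longrightarrow> f w = f w'" using dep0 by blast
  note [measurable] = g
  show "g' \<in> borel_measurable (stream_space M)" unfolding g'_def
    by (rule S.borel_measurable_nn_integral) measurable
  show "g' w \<le> f w" for w
  proof -
    have "g' w \<le> (\<integral>\<^sup>+v. f w \<partial>stream_space M)" unfolding g'_def
    proof (rule nn_integral_mono)
      fix v
      have "stake K (stake K w @- v) = stake K w" by (simp add: stake_shift)
      then have "f (stake K w @- v) = f w" by (rule dep)
      then show "g (stake K w @- v) \<le> f w" using le[of "stake K w @- v"] by simp
    qed
    also have "\<dots> = f w" by (simp add: S.emeasure_space_1)
    finally show ?thesis .
  qed
  show "stake K w = stake K w' \<Longrightarrow> g' w = g' w'" for w w' unfolding g'_def by simp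
  show "integral\<^sup>N (stream_space M) g' = integral\<^sup>N (stream_space M) g"
    unfolding g'_def by (rule nn_integral_stream_shift[symmetric, OF g])
qed

lemma mix_stream_ge:
  fixes F H :: "'a measure" and a :: ennreal
  assumes F: "prob_space F" and H: "prob_space H" and sets: "sets F = sets H"
    and mixH: "\<And>\<phi>. \<phi> \<in> borel_measurable F \<Longrightarrow> a * integral\<^sup>N F \<phi> \<le> integral\<^sup>N H \<phi>"
    and g: "g \<in> borel_measurable (stream_space F)"
    and dep0: "\<forall>w w'. stake K w = stake K w' \<longrightarrow> g w = g w'"
  shows "a ^ K * integral\<^sup>N (stream_space F) g \<le> integral\<^sup>N (stream_space H) g"
proof -
  have dep: "\<And>w w'. stake K w = stake K w' \<Longrightarrow> g w = g w'" using dep0 by blast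
  show ?thesis
  using g dep
proof (induction K arbitrary: g)
  case 0
  interpret SF: prob_space "stream_space F" by (rule prob_space.prob_space_stream_space[OF F])
  interpret SH: prob_space "stream_space H" by (rule prob_space.prob_space_stream_space[OF H])
  define w0 where "w0 = sconst (undefined::'a)"
  have "\<And>w. g w = g w0" using 0(2) by simp
  then have e: "g = (\<lambda>_. g w0)" by auto
  have "integral\<^sup>N (stream_space F) g = g w0" by (subst e) (simp add: SF.emeasure_space_1)
  moreover have "integral\<^sup>N (stream_space H) g = g w0" by (subst e) (simp add: SH.emeasure_space_1)
  ultimately show ?case by simp
next
  case (Suc K)
  interpret SF: prob_space "stream_space F" by (rule prob_space.prob_space_stream_space[OF F])
  interpret SH: prob_space "stream_space H" by (rule prob_space.prob_space_stream_space[OF H])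
  have ssets: "sets (stream_space F) = sets (stream_space H)" by (rule sets_stream_space_cong[OF sets])
  have spF: "space F = space H" using sets by (rule sets_eq_imp_space_eq)
  note gm[measurable] = Suc.prems(1)
  have gH: "g \<in> borel_measurable (stream_space H)"
    using Suc.prems(1) measurable_cong_sets[OF ssets refl] by blast
  have inner: "(\<lambda>x. \<integral>\<^sup>+w. g (x ## w) \<partial>stream_space F) \<in> borel_measurable F"
    by (rule SF.borel_measurable_nn_integral) measurable
  have "a ^ Suc K * integral\<^sup>N (stream_space F) g
      = a * (a ^ K * (\<integral>\<^sup>+x. \<integral>\<^sup>+w. g (x ## w) \<partial>stream_space F \<partial>F))"
    by (simp add: prob_space.nn_integral_stream_space[OF F gm] mult.assoc)
  also have "\<dots> = a * (\<integral>\<^sup>+x. a ^ K * \<integral>\<^sup>+w. g (x ## w) \<partial>stream_space F \<partial>F)"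
    using inner by (simp add: nn_integral_cmult)
  also have "\<dots> \<le> (\<integral>\<^sup>+x. a ^ K * \<integral>\<^sup>+w. g (x ## w) \<partial>stream_space F \<partial>H)"
    by (rule mixH) (use inner in measurable)
  also have "\<dots> \<le> (\<integral>\<^sup>+x. \<integral>\<^sup>+w. g (x ## w) \<partial>stream_space H \<partial>H)"
  proof (rule nn_integral_mono)
    fix x assume x: "x \<in> space H"
    then have xF: "x \<in> space F" using spF by simp
    have "(\<lambda>w. g (x ## w)) \<in> borel_measurable (stream_space F)" using xF by measurable
    moreover have "\<And>w w'. stake K w = stake K w' \<Longrightarrow> g (x ## w) = g (x ## w')"
      proof -
      fix w w' :: "'a stream" assume "stake K w = stake K w'"
      then show "g (x ## w) = g (x ## w')" using Suc.prems(2)[of "x ## w" "x ## w'"] by simp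
    qed
    ultimately show "a ^ K * (\<integral>\<^sup>+w. g (x ## w) \<partial>stream_space F) \<le> (\<integral>\<^sup>+w. g (x ## w) \<partial>stream_space H)"
      by (rule Suc.IH)
  qed
  also have "\<dots> = integral\<^sup>N (stream_space H) g"
    by (rule prob_space.nn_integral_stream_space[OF H gH, symmetric])
  finally show ?case .
qed
qed

lemma mix_lower_ge:
  fixes F H :: "'a measure" and a :: ennreal
  assumes F: "prob_space F" and H: "prob_space H" and sets: "sets F = sets H"
    and mixH: "\<And>\<phi>. \<phi> \<in> borel_measurable F \<Longrightarrow> a * integral\<^sup>N F \<phi> \<le> integral\<^sup>N H \<phi>"
    and fdep: "\<And>w w'. stake K w = stake K w' \<Longrightarrow> f w = f w'"
  shows "a ^ K * integral\<^sup>N (stream_space F) f \<le> integral\<^sup>N (stream_space H) f"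
proof (rule lower_int_mult_le)
  have fdep0: "\<forall>w w'. stake K w = stake K w' \<longrightarrow> f w = f w'" using fdep by blast
  fix g assume g: "g \<in> borel_measurable (stream_space F)" and le: "\<And>w. g w \<le> f w"
  have ssets: "sets (stream_space F) = sets (stream_space H)" by (rule sets_stream_space_cong[OF sets])
  define g' where "g' = (\<lambda>w. \<integral>\<^sup>+v. g (stake K w @- v) \<partial>stream_space F)"
  note A = prob_space.avg_prefix[where M=F and g=g and K=K and f=f, OF F g fdep0 le, folded g'_def]
  have A2: "\<And>w. g' w \<le> f w" unfolding g'_def by (rule A(2))
  have A3: "\<forall>w w'. stake K w = stake K w' \<longrightarrow> g' w = g' w'" unfolding g'_def using A(3) by blast
  have "a ^ K * integral\<^sup>N (stream_space F) g = a ^ K * integral\<^sup>N (stream_space F) g'"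
    using A(4) by simp
  also have "\<dots> \<le> integral\<^sup>N (stream_space H) g'"
    by (rule mix_stream_ge[OF F H sets mixH A(1) A3])
  also have "\<dots> \<le> integral\<^sup>N (stream_space H) f"
    by (rule nn_integral_mono) (rule A2)
  finally show "a ^ K * integral\<^sup>N (stream_space F) g \<le> integral\<^sup>N (stream_space H) f" .
qed

lemma mix_lower_le:
  fixes F H :: "'a measure" and a :: ennreal
  assumes F: "prob_space F" and H: "prob_space H" and sets: "sets F = sets H"
    and mixH: "\<And>\<phi>. \<phi> \<in> borel_measurable F \<Longrightarrow> a * integral\<^sup>N F \<phi> \<le> integral\<^sup>N H \<phi>"
    and fdep: "\<And>w w'. stake K w = stake K w' \<Longrightarrow> f w = f w'"
    and Bm: "B \<in> borel_measurable (stream_space F)"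
    and Bdep: "\<And>w w'. stake K w = stake K w' \<Longrightarrow> B w = B w'"
    and fB: "\<And>w. f w \<le> B w"
  shows "integral\<^sup>N (stream_space H) f + a ^ K * integral\<^sup>N (stream_space F) B
     \<le> a ^ K * integral\<^sup>N (stream_space F) f + integral\<^sup>N (stream_space H) B"
proof (rule lower_int_add_le)
  have fdep0: "\<forall>w w'. stake K w = stake K w' \<longrightarrow> f w = f w'" using fdep by blast
  fix g assume g: "g \<in> borel_measurable (stream_space H)" and le: "\<And>w. g w \<le> f w"
  have ssets: "sets (stream_space F) = sets (stream_space H)" by (rule sets_stream_space_cong[OF sets])
  have BmH: "B \<in> borel_measurable (stream_space H)"
    using Bm measurable_cong_sets[OF ssets refl] by blast
  define g' where "g' = (\<lambda>w. \<integral>\<^sup>+v. g (stake K w @- v) \<partial>stream_space H)"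
  note A = prob_space.avg_prefix[where M=H and g=g and K=K and f=f, OF H g fdep0 le, folded g'_def]
  have A2: "\<And>w. g' w \<le> f w" unfolding g'_def by (rule A(2))
  have A3: "\<forall>w w'. stake K w = stake K w' \<longrightarrow> g' w = g' w'" unfolding g'_def using A(3) by blast
  have g'F: "g' \<in> borel_measurable (stream_space F)"
    using A(1) measurable_cong_sets[OF ssets refl] by blast
  define d where "d = (\<lambda>w. B w - g' w)"
  have dF: "d \<in> borel_measurable (stream_space F)" unfolding d_def using Bm g'F by measurable
  have dH: "d \<in> borel_measurable (stream_space H)" unfolding d_def using BmH A(1) by measurable
  have ddep: "\<forall>w w'. stake K w = stake K w' \<longrightarrow> d w = d w'"
  proof (intro allI impI)
    fix w w' :: "'a stream" assume st: "stake K w = stake K w'"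
    show "d w = d w'" unfolding d_def using Bdep[OF st] A3[rule_format, OF st] by simp
  qed
  have g'B: "\<And>w. g' w \<le> B w" using A2 fB by (meson order_trans)
  have Bsplit: "\<And>w. B w = d w + g' w" unfolding d_def using g'B by (simp add: diff_add_cancel_ennreal)
  have eqB: "B = (\<lambda>w. d w + g' w)" using Bsplit by auto
  have intF: "integral\<^sup>N (stream_space F) B = integral\<^sup>N (stream_space F) d + integral\<^sup>N (stream_space F) g'"
    unfolding eqB by (rule nn_integral_add[OF dF g'F])
  have intH: "integral\<^sup>N (stream_space H) B = integral\<^sup>N (stream_space H) d + integral\<^sup>N (stream_space H) g'"
    unfolding eqB by (rule nn_integral_add[OF dH A(1)])
  have m1: "a ^ K * integral\<^sup>N (stream_space F) d \<le> integral\<^sup>N (stream_space H) d"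
    by (rule mix_stream_ge[OF F H sets mixH dF ddep])
  have m2: "integral\<^sup>N (stream_space F) g' \<le> integral\<^sup>N (stream_space F) f"
    by (rule nn_integral_mono) (rule A2)
  have "integral\<^sup>N (stream_space H) g + a ^ K * integral\<^sup>N (stream_space F) B
      = integral\<^sup>N (stream_space H) g' + (a ^ K * integral\<^sup>N (stream_space F) d + a ^ K * integral\<^sup>N (stream_space F) g')"
    using A(4) intF by (simp add: distrib_left)
  also have "\<dots> \<le> integral\<^sup>N (stream_space H) g' + (integral\<^sup>N (stream_space H) d + a ^ K * integral\<^sup>N (stream_space F) f)"
  proof -
    have "a ^ K * integral\<^sup>N (stream_space F) g' \<le> a ^ K * integral\<^sup>N (stream_space F) f"
      using m2 by (rule mult_left_mono) simp
    then show ?thesis using m1 by (simp add: add_mono add_left_mono)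
  qed
  also have "\<dots> = a ^ K * integral\<^sup>N (stream_space F) f + integral\<^sup>N (stream_space H) B"
    using intH by (simp add: ac_simps)
  finally show "integral\<^sup>N (stream_space H) g + a ^ K * integral\<^sup>N (stream_space F) B
     \<le> a ^ K * integral\<^sup>N (stream_space F) f + integral\<^sup>N (stream_space H) B" .
qed

lemma sets_mix: "sets (mix a F G) = sets borel"
proof -
  have sa: "sigma_algebra UNIV (sets (borel::real measure))"
    using sets.sigma_algebra_axioms[of "borel::real measure"] by simp
  show ?thesis unfolding mix_def
    by (subst sets_measure_of) (auto simp: sigma_algebra.sigma_sets_eq[OF sa])
qed

lemma space_mix: "space (mix a F G) = UNIV"
  using sets_eq_imp_space_eq[OF sets_mix[of a F G]] by simp

lemma mix_meas:
  assumes "f \<in> borel_measurable (mix a F G)" "sets M = sets borel"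
  shows "f \<in> borel_measurable M"
  using assms measurable_cong_sets[OF _ refl, of "mix a F G" M] sets_mix by metis

lemma emeasure_mix:
  assumes sF: "sets F = sets borel" and sG: "sets G = sets borel" and A: "A \<in> sets borel"
  shows "emeasure (mix a F G) A = ennreal a * emeasure F A + ennreal (1 - a) * emeasure G A"
  unfolding mix_def
proof (rule emeasure_measure_of_sigma)
  show "sigma_algebra UNIV (sets (borel::real measure))"
    using sets.sigma_algebra_axioms[of "borel::real measure"] by simp
  show "positive (sets borel) (\<lambda>A. ennreal a * emeasure F A + ennreal (1 - a) * emeasure G A)"
    by (simp add: positive_def)
  show "countably_additive (sets borel) (\<lambda>A. ennreal a * emeasure F A + ennreal (1 - a) * emeasure G A)"
    unfolding countably_additive_def
  proof (intro allI impI)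
    fix B :: "nat \<Rightarrow> real set"
    assume B: "range B \<subseteq> sets borel" "disjoint_family B"
    have BF: "range B \<subseteq> sets F" using B sF by simp
    have BG: "range B \<subseteq> sets G" using B sG by simp
    show "(\<Sum>i. ennreal a * emeasure F (B i) + ennreal (1 - a) * emeasure G (B i))
        = ennreal a * emeasure F (\<Union> (range B)) + ennreal (1 - a) * emeasure G (\<Union> (range B))"
      by (simp add: suminf_add[symmetric, OF summableI summableI] suminf_emeasure[OF BF B(2)]
          suminf_emeasure[OF BG B(2)])
  qed
qed (rule A)

lemma nn_integral_mix:
  assumes sF: "sets F = sets borel" and sG: "sets G = sets borel"
    and phi: "\<phi> \<in> borel_measurable (mix a F G)"
  shows "integral\<^sup>N (mix a F G) \<phi> = ennreal a * integral\<^sup>N F \<phi> + ennreal (1 - a) * integral\<^sup>N G \<phi>"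
  using phi
proof induction
  case (cong f g)
  have "\<And>x. f x = g x" using cong.hyps(3) by (simp add: space_mix)
  then have "f = g" by auto
  thus ?case using cong by simp
next
  case (set A)
  then have A: "A \<in> sets borel" by (simp add: sets_mix)
  then have AF: "A \<in> sets F" and AG: "A \<in> sets G" using sF sG by auto
  show ?case using emeasure_mix[OF sF sG A] AF AG
    by (simp add: sets_mix A)
next
  case (mult u c)
  have uF: "u \<in> borel_measurable F" by (rule mix_meas[OF mult.hyps(2) sF])
  have uG: "u \<in> borel_measurable G" by (rule mix_meas[OF mult.hyps(2) sG])
  show ?case using mult uF uG
    by (simp add: nn_integral_cmult distrib_left mult.left_commute)
next
  case (add u v)
  have uF: "u \<in> borel_measurable F" by (rule mix_meas[OF add.hyps(1) sF])
  have uG: "u \<in> borel_measurable G" by (rule mix_meas[OF add.hyps(1) sG])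
  have vF: "v \<in> borel_measurable F" by (rule mix_meas[OF add.hyps(3) sF])
  have vG: "v \<in> borel_measurable G" by (rule mix_meas[OF add.hyps(3) sG])
  show ?case using add uF uG vF vG
    by (simp add: nn_integral_add distrib_left ac_simps)
next
  case (seq U)
  have UF: "\<And>i. U i \<in> borel_measurable F" by (rule mix_meas[OF seq.hyps(1) sF])
  have UG: "\<And>i. U i \<in> borel_measurable G" by (rule mix_meas[OF seq.hyps(1) sG])
  have incF: "incseq (\<lambda>i. ennreal a * integral\<^sup>N F (U i))"
    using seq.hyps(3) by (auto simp: incseq_def le_fun_def intro!: mult_left_mono nn_integral_mono)
  have incG: "incseq (\<lambda>i. ennreal (1 - a) * integral\<^sup>N G (U i))"
    using seq.hyps(3) by (auto simp: incseq_def le_fun_def intro!: mult_left_mono nn_integral_mono)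
  have "integral\<^sup>N (mix a F G) (SUP i. U i) = (SUP i. integral\<^sup>N (mix a F G) (U i))"
    using seq.hyps(1,3) by (simp add: SUP_apply[abs_def] nn_integral_monotone_convergence_SUP)
  also have "\<dots> = (SUP i. ennreal a * integral\<^sup>N F (U i) + ennreal (1 - a) * integral\<^sup>N G (U i))"
    using seq.IH by simp
  also have "\<dots> = (SUP i. ennreal a * integral\<^sup>N F (U i)) + (SUP i. ennreal (1 - a) * integral\<^sup>N G (U i))"
    by (rule ennreal_SUP_add[OF incF incG])
  also have "\<dots> = ennreal a * (SUP i. integral\<^sup>N F (U i)) + ennreal (1 - a) * (SUP i. integral\<^sup>N G (U i))"
    by (simp add: SUP_mult_left_ennreal)
  also have "\<dots> = ennreal a * integral\<^sup>N F (SUP i. U i) + ennreal (1 - a) * integral\<^sup>N G (SUP i. U i)"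
    using UF UG seq.hyps(3) by (simp add: SUP_apply[abs_def] nn_integral_monotone_convergence_SUP)
  finally show ?case .
qed

definition tt :: "real \<Rightarrow> (real list \<Rightarrow> real) \<Rightarrow> real list \<Rightarrow> nat \<Rightarrow> real stream \<Rightarrow> ennreal" where
  "tt \<delta> p h k w = ennreal (\<delta> ^ k * best (h @ stake k w) * p (h @ stake k w)
        * (\<Prod>j<k. 1 - p (h @ stake j w)))"

definition bb :: "real \<Rightarrow> real list \<Rightarrow> nat \<Rightarrow> real stream \<Rightarrow> ennreal" where
  "bb \<delta> h k w = ennreal (\<delta> ^ k * (best h + (\<Sum>i<k. \<bar>w !! i\<bar>)))"

definition cc :: "real \<Rightarrow> real list \<Rightarrow> real \<Rightarrow> nat \<Rightarrow> real" where
  "cc \<delta> h m k = \<delta> ^ k * (best h + real k * m)"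

lemma stop_payoff_tt: "stop_payoff \<delta> p h w = (\<Sum>k. tt \<delta> p h k w)"
  by (simp add: stop_payoff_def tt_def)

lemma best_mono: assumes "h \<noteq> []" shows "best h \<le> best (h @ l)"
  unfolding best_def using assms by (intro Max_mono) auto

lemma best_app_le:
  assumes h: "h \<noteq> []" and b: "0 \<le> best h"
  shows "best (h @ stake k w) \<le> best h + (\<Sum>i<k. \<bar>w !! i\<bar>)"
proof -
  have s0: "0 \<le> (\<Sum>i<k. \<bar>w !! i\<bar>)" by (simp add: sum_nonneg)
  have "\<forall>y\<in>set (h @ stake k w). y \<le> best h + (\<Sum>i<k. \<bar>w !! i\<bar>)"
  proof
    fix y assume "y \<in> set (h @ stake k w)"
    then consider "y \<in> set h" | "y \<in> set (stake k w)" by auto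
    then show "y \<le> best h + (\<Sum>i<k. \<bar>w !! i\<bar>)"
    proof cases
      case 1
      then have "y \<le> best h" unfolding best_def by simp
      then show ?thesis using s0 by linarith
    next
      case 2
      then obtain i where i: "i < k" "y = w !! i"
        by (auto simp: in_set_conv_nth stake_nth)
      have "y \<le> \<bar>w !! i\<bar>" using i by simp
      also have "\<dots> \<le> (\<Sum>i<k. \<bar>w !! i\<bar>)"
        using i by (intro member_le_sum) auto
      finally show ?thesis using b by linarith
    qed
  qed
  then show ?thesis unfolding best_def using h by (subst Max_le_iff) auto
qed

lemma tt_le_bb:
  assumes d: "0 \<le> \<delta>" and p: "decision_rule p" and h: "h \<noteq> []" and b: "0 \<le> best h"
  shows "tt \<delta> p h k w \<le> bb \<delta> h k w"
proof -
  let ?B = "best (h @ stake k w)"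
  let ?P = "(\<Prod>j<k. 1 - p (h @ stake j w))"
  have pb: "\<And>l. 0 \<le> p l \<and> p l \<le> 1" using p unfolding decision_rule_def by blast
  have B0: "0 \<le> ?B" using best_mono[OF h, of "stake k w"] b by linarith
  have P0: "0 \<le> ?P" using pb by (intro prod_nonneg) (simp add: pb)
  have P1: "?P \<le> 1" using pb by (intro prod_le_1) (auto simp: pb)
  have "p (h @ stake k w) * ?P \<le> 1" using pb[of "h @ stake k w"] P0 P1 by (simp add: mult_le_one)
  then have "\<delta> ^ k * ?B * (p (h @ stake k w) * ?P) \<le> \<delta> ^ k * ?B * 1"
    using d B0 pb[of "h @ stake k w"] P0 by (intro mult_left_mono) auto
  also have "\<dots> \<le> \<delta> ^ k * (best h + (\<Sum>i<k. \<bar>w !! i\<bar>))"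
    using best_app_le[OF h b] d by (simp add: mult_left_mono)
  finally show ?thesis unfolding tt_def bb_def by (intro ennreal_leI) (simp add: mult.assoc)
qed

lemma stake_eq_le: "stake K w = stake K w' \<Longrightarrow> j \<le> K \<Longrightarrow> stake j w = stake j w'"
  by (metis min.absorb1 take_stake)

lemma tt_dep: "k \<le> K \<Longrightarrow> stake K w = stake K w' \<Longrightarrow> tt \<delta> p h k w = tt \<delta> p h k w'"
proof -
  assume k: "k \<le> K" and s: "stake K w = stake K w'"
  have "\<And>j. j \<le> k \<Longrightarrow> stake j w = stake j w'" using k s stake_eq_le by (meson order_trans)
  then have e: "\<And>j. j \<le> k \<Longrightarrow> stake j w = stake j w'" .
  have "(\<Prod>j<k. 1 - p (h @ stake j w)) = (\<Prod>j<k. 1 - p (h @ stake j w'))"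
    by (rule prod.cong) (auto simp: e)
  then show ?thesis unfolding tt_def using e[of k] by simp
qed

lemma bb_dep: "k \<le> K \<Longrightarrow> stake K w = stake K w' \<Longrightarrow> bb \<delta> h k w = bb \<delta> h k w'"
proof -
  assume k: "k \<le> K" and s: "stake K w = stake K w'"
  have "\<And>i. i < k \<Longrightarrow> w !! i = w' !! i"
    using k s by (metis less_le_trans stake_nth)
  then have "(\<Sum>i<k. \<bar>w !! i\<bar>) = (\<Sum>i<k. \<bar>w' !! i\<bar>)"
    by (intro sum.cong) auto
  then show ?thesis unfolding bb_def by simp
qed

lemma snth_meas:
  assumes "sets M = sets (borel :: real measure)"
  shows "(\<lambda>w. w !! i) \<in> borel_measurable (stream_space M)"
  using measurable_snth[of i M] measurable_cong_sets[OF refl assms] by blast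

lemma bb_meas:
  assumes "sets M = sets (borel :: real measure)"
  shows "bb \<delta> h k \<in> borel_measurable (stream_space M)"
proof -
  note [measurable] = snth_meas[OF assms]
  show ?thesis unfolding bb_def by measurable
qed

lemma (in prob_space) nn_integral_snth:
  assumes [measurable]: "\<phi> \<in> borel_measurable M"
  shows "(\<integral>\<^sup>+w. \<phi> (w !! i) \<partial>stream_space M) = integral\<^sup>N M \<phi>"
proof (induction i)
  case 0
  interpret S: prob_space "stream_space M" by (rule prob_space_stream_space)
  show ?case
    by (subst nn_integral_stream_space) (auto simp: S.emeasure_space_1)
next
  case (Suc i)
  interpret S: prob_space "stream_space M" by (rule prob_space_stream_space)
  show ?case
    by (subst nn_integral_stream_space) (auto simp: Suc emeasure_space_1)
qed

definition mu :: "real measure \<Rightarrow> real" where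
  "mu M = (\<integral>x. \<bar>x\<bar> \<partial>M)"

lemma mu_nonneg: "0 \<le> mu M" unfolding mu_def by (rule integral_nonneg_AE) auto

lemma nn_int_abs:
  assumes "integrable M (\<lambda>x. x::real)"
  shows "(\<integral>\<^sup>+x. ennreal \<bar>x\<bar> \<partial>M) = ennreal (mu M)"
  unfolding mu_def using integrable_abs[OF assms] by (intro nn_integral_eq_integral) auto

lemma summable_kpow:
  fixes \<delta> :: real
  assumes "0 \<le> \<delta>" "\<delta> < 1"
  shows "summable (\<lambda>k. real k * \<delta> ^ k)"
proof -
  have "summable (\<lambda>n. diffs (\<lambda>_. 1::real) n * \<delta> ^ n)"
    by (rule termdiff_converges[of \<delta> 1]) (use assms in \<open>auto intro: summable_geometric\<close>)
  then have s: "summable (\<lambda>n. real (Suc n) * \<delta> ^ n)" by (simp add: diffs_def)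
  show ?thesis
    by (rule summable_comparison_test[OF _ s]) (use assms in \<open>auto intro!: exI[of _ 0] mult_right_mono\<close>)
qed

lemma summable_cc:
  assumes "0 \<le> \<delta>" "\<delta> < 1"
  shows "summable (cc \<delta> h m)"
proof -
  have "summable (\<lambda>k. best h * \<delta> ^ k + m * (real k * \<delta> ^ k))"
    using assms summable_kpow[OF assms] summable_geometric[of \<delta>]
    by (intro summable_add summable_mult) auto
  then show ?thesis unfolding cc_def by (simp add: algebra_simps)
qed

lemma cc_nonneg: "0 \<le> \<delta> \<Longrightarrow> 0 \<le> best h \<Longrightarrow> 0 \<le> m \<Longrightarrow> 0 \<le> cc \<delta> h m k"
  unfolding cc_def by simp

lemma int_bb:
  assumes P: "prob_space M" and sM: "sets M = sets borel" and I: "integrable M (\<lambda>x. x)"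
    and d: "0 \<le> \<delta>" and b: "0 \<le> best h"
  shows "(\<integral>\<^sup>+w. bb \<delta> h k w \<partial>stream_space M) = ennreal (cc \<delta> h (mu M) k)"
proof -
  interpret prob_space M by (rule P)
  interpret S: prob_space "stream_space M" by (rule prob_space_stream_space)
  note [measurable] = snth_meas[OF sM]
  have absm: "(\<lambda>x. ennreal \<bar>x\<bar>) \<in> borel_measurable M"
  proof -
    have "(\<lambda>x. ennreal \<bar>x\<bar>) \<in> borel_measurable (borel::real measure)" by measurable
    moreover have e: "(M \<rightarrow>\<^sub>M (borel::ennreal measure)) = (borel \<rightarrow>\<^sub>M borel)"
      by (rule measurable_cong_sets[OF sM refl])
    ultimately show ?thesis by simp
  qed
  have eq: "bb \<delta> h k w = ennreal (\<delta> ^ k) * (ennreal (best h) + (\<Sum>i<k. ennreal \<bar>w !! i\<bar>))" for w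
    unfolding bb_def using d b by (simp add: ennreal_mult ennreal_plus sum_nonneg)
  have "(\<integral>\<^sup>+w. bb \<delta> h k w \<partial>stream_space M)
      = ennreal (\<delta> ^ k) * (\<integral>\<^sup>+w. ennreal (best h) + (\<Sum>i<k. ennreal \<bar>w !! i\<bar>) \<partial>stream_space M)"
    unfolding eq by (rule nn_integral_cmult) measurable
  also have "(\<integral>\<^sup>+w. ennreal (best h) + (\<Sum>i<k. ennreal \<bar>w !! i\<bar>) \<partial>stream_space M)
      = ennreal (best h) + (\<Sum>i<k. \<integral>\<^sup>+w. ennreal \<bar>w !! i\<bar> \<partial>stream_space M)"
  proof -
    have "(\<integral>\<^sup>+w. (\<Sum>i<k. ennreal \<bar>w !! i\<bar>) \<partial>stream_space M) = (\<Sum>i<k. \<integral>\<^sup>+w. ennreal \<bar>w !! i\<bar> \<partial>stream_space M)"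
      by (rule nn_integral_sum) measurable
    moreover have "(\<integral>\<^sup>+w. ennreal (best h) + (\<Sum>i<k. ennreal \<bar>w !! i\<bar>) \<partial>stream_space M)
      = (\<integral>\<^sup>+w. ennreal (best h) \<partial>stream_space M) + (\<integral>\<^sup>+w. (\<Sum>i<k. ennreal \<bar>w !! i\<bar>) \<partial>stream_space M)"
      by (rule nn_integral_add) measurable
    ultimately show ?thesis by (simp add: S.emeasure_space_1 del: sum_ennreal)
  qed
  also have "(\<Sum>i<k. \<integral>\<^sup>+w. ennreal \<bar>w !! i\<bar> \<partial>stream_space M) = (\<Sum>i<k. ennreal (mu M))"
    using nn_integral_snth[OF absm] nn_int_abs[OF I] by simp
  also have "ennreal (\<delta> ^ k) * (ennreal (best h) + (\<Sum>i<k. ennreal (mu M))) = ennreal (cc \<delta> h (mu M) k)"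
  proof -
    have "(\<Sum>i<k. ennreal (mu M)) = ennreal (real k * mu M)"
      using mu_nonneg[of M] by (simp add: ennreal_mult ennreal_of_nat_eq_real_of_nat)
    then show ?thesis unfolding cc_def using d b mu_nonneg[of M]
      by (simp add: ennreal_mult ennreal_plus)
  qed
  finally show ?thesis .
qed

lemma int_tail:
  assumes P: "prob_space M" and sM: "sets M = sets borel" and I: "integrable M (\<lambda>x. x)"
    and d: "0 \<le> \<delta>" "\<delta> < 1" and b: "0 \<le> best h"
  shows "(\<integral>\<^sup>+w. (\<Sum>j. bb \<delta> h (j + K) w) \<partial>stream_space M) = ennreal (\<Sum>j. cc \<delta> h (mu M) (j + K))"
proof -
  have "(\<integral>\<^sup>+w. (\<Sum>j. bb \<delta> h (j + K) w) \<partial>stream_space M) = (\<Sum>j. \<integral>\<^sup>+w. bb \<delta> h (j + K) w \<partial>stream_space M)"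
    by (rule nn_integral_suminf) (rule bb_meas[OF sM])
  also have "\<dots> = (\<Sum>j. ennreal (cc \<delta> h (mu M) (j + K)))"
    using int_bb[OF P sM I d(1) b] by simp
  also have "\<dots> = ennreal (\<Sum>j. cc \<delta> h (mu M) (j + K))"
    by (rule suminf_ennreal2) (use cc_nonneg[OF d(1) b mu_nonneg] summable_cc[OF d] summable_iff_shift in auto)
  finally show ?thesis .
qed

lemma U_split:
  assumes P: "prob_space M" and sM: "sets M = sets borel" and I: "integrable M (\<lambda>x. x)"
    and d: "0 \<le> \<delta>" "\<delta> < 1" and p: "decision_rule p" and h: "h \<noteq> []" and b: "0 \<le> best h"
  shows "U \<delta> p M h \<le> (\<integral>\<^sup>+w. (\<Sum>k<K. tt \<delta> p h k w) \<partial>stream_space M) + ennreal (\<Sum>j. cc \<delta> h (mu M) (j + K))"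
proof -
  have tm: "(\<lambda>w. \<Sum>j. bb \<delta> h (j + K) w) \<in> borel_measurable (stream_space M)"
  proof -
    have [measurable]: "\<And>k. bb \<delta> h k \<in> borel_measurable (stream_space M)" by (rule bb_meas[OF sM])
    show ?thesis by measurable
  qed
  have "U \<delta> p M h \<le> (\<integral>\<^sup>+w. (\<Sum>k<K. tt \<delta> p h k w) + (\<Sum>j. bb \<delta> h (j + K) w) \<partial>stream_space M)"
    unfolding U_def stop_payoff_tt
  proof (rule nn_integral_mono)
    fix w
    have e: "(\<Sum>k. tt \<delta> p h k w) = (\<Sum>j. tt \<delta> p h (j + K) w) + (\<Sum>k<K. tt \<delta> p h k w)"
      by (rule suminf_offset[OF summableI])
    have l: "(\<Sum>j. tt \<delta> p h (j + K) w) \<le> (\<Sum>j. bb \<delta> h (j + K) w)"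
      by (rule suminf_le[OF _ summableI summableI]) (rule tt_le_bb[OF d(1) p h b])
    show "(\<Sum>k. tt \<delta> p h k w) \<le> (\<Sum>k<K. tt \<delta> p h k w) + (\<Sum>j. bb \<delta> h (j + K) w)"
      unfolding e using l by (simp add: add.commute add_left_mono)
  qed
  also have "\<dots> \<le> (\<integral>\<^sup>+w. (\<Sum>k<K. tt \<delta> p h k w) \<partial>stream_space M) + (\<integral>\<^sup>+w. (\<Sum>j. bb \<delta> h (j + K) w) \<partial>stream_space M)"
    by (rule lower_int_subadd[OF tm])
  also have "(\<integral>\<^sup>+w. (\<Sum>j. bb \<delta> h (j + K) w) \<partial>stream_space M) = ennreal (\<Sum>j. cc \<delta> h (mu M) (j + K))"
    by (rule int_tail[OF P sM I d b])
  finally show ?thesis .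
qed

lemma trunc_le_U: "(\<integral>\<^sup>+w. (\<Sum>k<K. tt \<delta> p h k w) \<partial>stream_space M) \<le> U \<delta> p M h"
  unfolding U_def stop_payoff_tt by (rule nn_integral_mono) (rule sum_le_suminf[OF summableI], auto)

lemma U_le_tot:
  assumes P: "prob_space M" and sM: "sets M = sets borel" and I: "integrable M (\<lambda>x. x)"
    and d: "0 \<le> \<delta>" "\<delta> < 1" and p: "decision_rule p" and h: "h \<noteq> []" and b: "0 \<le> best h"
  shows "U \<delta> p M h \<le> ennreal (\<Sum>k. cc \<delta> h (mu M) k)"
  using U_split[OF P sM I d p h b, of 0] by simp

lemma V_le_tot:
  assumes P: "prob_space M" and sM: "sets M = sets borel" and I: "integrable M (\<lambda>x. x)"
    and d: "0 \<le> \<delta>" "\<delta> < 1" and h: "h \<noteq> []" and b: "0 \<le> best h"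
  shows "V \<delta> M h \<le> ennreal (\<Sum>k. cc \<delta> h (mu M) k)"
  unfolding V_def using U_le_tot[OF P sM I d _ h b] by (auto intro: SUP_least)

lemma V_ge_best:
  assumes P: "prob_space M"
  shows "ennreal (best h) \<le> V \<delta> M h"
proof -
  interpret S: prob_space "stream_space M" by (rule prob_space.prob_space_stream_space[OF P])
  have dr: "decision_rule (\<lambda>_. 1)" unfolding decision_rule_def by simp
  have "\<And>w. stop_payoff \<delta> (\<lambda>_. 1) h w = ennreal (best h)"
  proof -
    fix w
    have "(\<Sum>k. tt \<delta> (\<lambda>_. 1) h k w) = (\<Sum>k<1. tt \<delta> (\<lambda>_. 1) h k w)"
      by (rule suminf_finite) (auto simp: tt_def power_0_left)
    then show "stop_payoff \<delta> (\<lambda>_. 1) h w = ennreal (best h)" by (simp add: stop_payoff_tt tt_def)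
  qed
  then have "stop_payoff \<delta> (\<lambda>_. 1) h = (\<lambda>_. ennreal (best h))" by (rule ext)
  then have "U \<delta> (\<lambda>_. 1) M h = ennreal (best h)" unfolding U_def by (simp add: S.emeasure_space_1)
  moreover have "U \<delta> (\<lambda>_. 1) M h \<le> V \<delta> M h" unfolding V_def using dr by (auto intro: SUP_upper)
  ultimately show ?thesis by simp
qed

lemma mix_ge:
  assumes sF: "sets F = sets borel" and sG: "sets G = sets borel"
    and phi: "\<phi> \<in> borel_measurable F"
  shows "ennreal a * integral\<^sup>N F \<phi> \<le> integral\<^sup>N (mix a F G) \<phi>"
proof -
  have "\<phi> \<in> borel_measurable (mix a F G)"
    using phi measurable_cong_sets[OF _ refl, of F "mix a F G"] sF sets_mix by metis
  from nn_integral_mix[OF sF sG this] show ?thesis by simp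
qed

lemma mu_mix:
  assumes sF: "sets F = sets borel" and sG: "sets G = sets borel"
    and IF: "integrable F (\<lambda>x. x)" and IG: "integrable G (\<lambda>x. x)" and IH: "integrable (mix a F G) (\<lambda>x. x)"
    and a: "0 \<le> a" "a \<le> 1"
  shows "mu (mix a F G) = a * mu F + (1 - a) * mu G"
proof -
  have m: "(\<lambda>x. ennreal \<bar>x\<bar>) \<in> borel_measurable (mix a F G)"
    by (simp add: sets_mix measurable_cong_sets[OF sets_mix refl])
  have "ennreal (mu (mix a F G)) = ennreal a * ennreal (mu F) + ennreal (1 - a) * ennreal (mu G)"
    using nn_integral_mix[OF sF sG m] nn_int_abs[OF IF] nn_int_abs[OF IG] nn_int_abs[OF IH] by simp
  also have "\<dots> = ennreal (a * mu F + (1 - a) * mu G)"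
    using a mu_nonneg[of F] mu_nonneg[of G] by (simp add: ennreal_plus ennreal_mult)
  finally show ?thesis
    using a mu_nonneg[of F] mu_nonneg[of G] mu_nonneg[of "mix a F G"] by (subst (asm) ennreal_inj) auto
qed

lemma int_B:
  assumes P: "prob_space M" and sM: "sets M = sets borel" and I: "integrable M (\<lambda>x. x)"
    and d: "0 \<le> \<delta>" and b: "0 \<le> best h"
  shows "(\<integral>\<^sup>+w. (\<Sum>k<K. bb \<delta> h k w) \<partial>stream_space M) = ennreal (\<Sum>k<K. cc \<delta> h (mu M) k)"
proof -
  have "(\<integral>\<^sup>+w. (\<Sum>k<K. bb \<delta> h k w) \<partial>stream_space M) = (\<Sum>k<K. \<integral>\<^sup>+w. bb \<delta> h k w \<partial>stream_space M)"
    by (rule nn_integral_sum) (simp add: bb_meas[OF sM])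
  also have "\<dots> = (\<Sum>k<K. ennreal (cc \<delta> h (mu M) k))" using int_bb[OF P sM I d b] by simp
  also have "\<dots> = ennreal (\<Sum>k<K. cc \<delta> h (mu M) k)"
    using cc_nonneg[OF d b mu_nonneg] by simp
  finally show ?thesis .
qed

lemma cc_mono_m: "0 \<le> \<delta> \<Longrightarrow> m \<le> m' \<Longrightarrow> cc \<delta> h m k \<le> cc \<delta> h m' k"
  unfolding cc_def by (intro mult_left_mono add_left_mono mult_left_mono) auto

lemma tail_mono_m:
  assumes d: "0 \<le> \<delta>" "\<delta> < 1" and "m \<le> m'"
  shows "(\<Sum>j. cc \<delta> h m (j + K)) \<le> (\<Sum>j. cc \<delta> h m' (j + K))"
  using assms cc_mono_m summable_cc[OF d] summable_iff_shift
  by (intro suminf_le) auto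

lemma cc_mix_diff:
  assumes d: "0 \<le> \<delta>" and b: "0 \<le> best h" and a: "0 \<le> a" "a \<le> 1" and k: "k < K"
    and mF: "0 \<le> mF" and mG: "0 \<le> mG"
  shows "cc \<delta> h (a * mF + (1 - a) * mG) k - a ^ K * cc \<delta> h mF k \<le> (1 - a ^ K) * cc \<delta> h (mF + mG) k"
proof -
  have aK: "a ^ K \<le> a" using power_decreasing[of 1 K a] a k by simp
  have aK1: "a ^ K \<le> 1" using a by (simp add: power_le_one)
  have aK0: "0 \<le> a ^ K" using a by simp
  have "real k * (a * mF) \<le> real k * mF" using a mF by (intro mult_left_mono) (auto simp: mult_left_le_one_le)
  moreover have "real k * ((1 - a) * mG) \<le> real k * ((1 - a ^ K) * mG)"
    using aK mG by (intro mult_left_mono mult_right_mono) auto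
  ultimately have key: "best h + real k * (a * mF + (1 - a) * mG) - a ^ K * (best h + real k * mF)
      \<le> (1 - a ^ K) * (best h + real k * (mF + mG))"
    by (simp add: algebra_simps)
  have "cc \<delta> h (a * mF + (1 - a) * mG) k - a ^ K * cc \<delta> h mF k
      = \<delta> ^ k * (best h + real k * (a * mF + (1 - a) * mG) - a ^ K * (best h + real k * mF))"
    unfolding cc_def by (simp add: algebra_simps)
  also have "\<dots> \<le> \<delta> ^ k * ((1 - a ^ K) * (best h + real k * (mF + mG)))"
    using key d by (intro mult_left_mono) auto
  also have "\<dots> = (1 - a ^ K) * cc \<delta> h (mF + mG) k" unfolding cc_def by (simp add: algebra_simps)
  finally show ?thesis .
qed

lemma B_mix_diff:
  assumes d: "0 \<le> \<delta>" "\<delta> < 1" and b: "0 \<le> best h" and a: "0 \<le> a" "a \<le> 1"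
    and mF: "0 \<le> mF" and mG: "0 \<le> mG"
  shows "(\<Sum>k<K. cc \<delta> h (a * mF + (1 - a) * mG) k) - a ^ K * (\<Sum>k<K. cc \<delta> h mF k)
     \<le> (1 - a ^ K) * (\<Sum>k. cc \<delta> h (mF + mG) k)"
proof -
  have "(\<Sum>k<K. cc \<delta> h (a * mF + (1 - a) * mG) k) - a ^ K * (\<Sum>k<K. cc \<delta> h mF k)
      = (\<Sum>k<K. cc \<delta> h (a * mF + (1 - a) * mG) k - a ^ K * cc \<delta> h mF k)"
    by (simp add: sum_subtractf sum_distrib_left)
  also have "\<dots> \<le> (\<Sum>k<K. (1 - a ^ K) * cc \<delta> h (mF + mG) k)"
    by (intro sum_mono cc_mix_diff[OF d(1) b a _ mF mG]) auto
  also have "\<dots> = (1 - a ^ K) * (\<Sum>k<K. cc \<delta> h (mF + mG) k)" by (simp add: sum_distrib_left)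
  also have "\<dots> \<le> (1 - a ^ K) * (\<Sum>k. cc \<delta> h (mF + mG) k)"
    using a d b mF mG
    by (intro mult_left_mono sum_le_suminf summable_cc cc_nonneg) (auto simp: power_le_one)
  finally show ?thesis .
qed

lemma V_mix_lower:
  assumes PF: "prob_space F" and sF: "sets F = sets borel" and IF: "integrable F (\<lambda>x. x)"
    and sG: "sets G = sets borel"
    and PH: "prob_space (mix a F G)"
    and d: "0 \<le> \<delta>" "\<delta> < 1" and h: "h \<noteq> []" and b: "0 \<le> best h" and a: "0 \<le> a"
    and q: "decision_rule q" and m: "mu F \<le> m"
  shows "ennreal (a ^ K * (enn2real (U \<delta> q F h) - (\<Sum>j. cc \<delta> h m (j + K)))) \<le> V \<delta> (mix a F G) h"
proof -
  define H where "H = mix a F G"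
  define f where "f = (\<lambda>w. \<Sum>k<K. tt \<delta> q h k w)"
  define \<tau> where "\<tau> = (\<Sum>j. cc \<delta> h m (j + K))"
  have sets: "sets F = sets H" unfolding H_def by (simp add: sF sets_mix)
  have dep: "\<And>w w'. stake K w = stake K w' \<Longrightarrow> f w = f w'"
    unfolding f_def by (intro sum.cong refl tt_dep) auto
  have mixH: "\<And>\<phi>. \<phi> \<in> borel_measurable F \<Longrightarrow> ennreal a * integral\<^sup>N F \<phi> \<le> integral\<^sup>N H \<phi>"
    unfolding H_def by (rule mix_ge[OF sF sG])
  have G1: "ennreal a ^ K * integral\<^sup>N (stream_space F) f \<le> integral\<^sup>N (stream_space H) f"
    by (rule mix_lower_ge[OF PF PH[folded H_def] sets mixH dep])
  have G2: "integral\<^sup>N (stream_space H) f \<le> V \<delta> H h"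
  proof -
    have "integral\<^sup>N (stream_space H) f \<le> U \<delta> q H h" unfolding f_def by (rule trunc_le_U)
    also have "\<dots> \<le> V \<delta> H h" unfolding V_def using q by (auto intro: SUP_upper)
    finally show ?thesis .
  qed
  have G3: "U \<delta> q F h \<le> integral\<^sup>N (stream_space F) f + ennreal \<tau>"
  proof -
    have "U \<delta> q F h \<le> integral\<^sup>N (stream_space F) f + ennreal (\<Sum>j. cc \<delta> h (mu F) (j + K))"
      unfolding f_def by (rule U_split[OF PF sF IF d q h b])
    also have "\<dots> \<le> integral\<^sup>N (stream_space F) f + ennreal \<tau>"
      unfolding \<tau>_def using tail_mono_m[OF d m] by (intro add_left_mono ennreal_leI)
    finally show ?thesis .
  qed
  have fin: "U \<delta> q F h < \<top>" using U_le_tot[OF PF sF IF d q h b] by (simp add: le_less_trans)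
  define uF where "uF = enn2real (U \<delta> q F h)"
  have UF: "U \<delta> q F h = ennreal uF" unfolding uF_def using fin by simp
  have uF0: "0 \<le> uF" unfolding uF_def by simp
  have t0: "0 \<le> \<tau>" unfolding \<tau>_def using cc_nonneg[OF d(1) b] summable_cc[OF d] summable_iff_shift
    by (intro suminf_nonneg) (auto intro: order_trans[OF mu_nonneg m])
  have G4: "ennreal (uF - \<tau>) \<le> integral\<^sup>N (stream_space F) f"
  proof -
    have "ennreal (uF - \<tau>) = ennreal uF - ennreal \<tau>" using t0 by (simp add: ennreal_minus)
    also have "\<dots> \<le> integral\<^sup>N (stream_space F) f"
      using G3 UF by (auto simp: ennreal_minus_le_iff add.commute)
    finally show ?thesis .
  qed
  show ?thesis
  proof (cases "uF - \<tau> \<le> 0")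
    case True
    then have "a ^ K * (uF - \<tau>) \<le> 0" using a by (simp add: mult_nonneg_nonpos)
    then have "ennreal (a ^ K * (uF - \<tau>)) = 0" by (simp add: ennreal_neg)
    then show ?thesis unfolding uF_def \<tau>_def by simp
  next
    case False
    have "ennreal (a ^ K * (uF - \<tau>)) = ennreal a ^ K * ennreal (uF - \<tau>)"
      using a by (simp add: ennreal_mult' ennreal_power)
    also have "\<dots> \<le> ennreal a ^ K * integral\<^sup>N (stream_space F) f" by (rule mult_left_mono[OF G4]) simp
    also have "\<dots> \<le> V \<delta> H h" using G1 G2 by simp
    finally show ?thesis unfolding H_def uF_def \<tau>_def .
  qed
qed

lemma U_mix_upper:
  assumes PF: "prob_space F" and sF: "sets F = sets borel" and IF: "integrable F (\<lambda>x. x)"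
    and sG: "sets G = sets borel" and IG: "integrable G (\<lambda>x. x)"
    and PH: "prob_space (mix a F G)" and IH: "integrable (mix a F G) (\<lambda>x. x)"
    and d: "0 \<le> \<delta>" "\<delta> < 1" and h: "h \<noteq> []" and b: "0 \<le> best h" and a: "0 \<le> a" "a \<le> 1"
    and p: "decision_rule p"
  shows "U \<delta> p (mix a F G) h \<le> ennreal (enn2real (U \<delta> p F h)
      + (1 - a ^ K) * (\<Sum>k. cc \<delta> h (mu F + mu G) k) + (\<Sum>j. cc \<delta> h (mu F + mu G) (j + K)))"
proof -
  define H where "H = mix a F G"
  define f where "f = (\<lambda>w. \<Sum>k<K. tt \<delta> p h k w)"
  define B where "B = (\<lambda>w. \<Sum>k<K. bb \<delta> h k w)"
  define m where "m = mu F + mu G"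
  define \<tau> where "\<tau> = (\<Sum>j. cc \<delta> h m (j + K))"
  define C where "C = (\<Sum>k. cc \<delta> h m k)"
  have sH: "sets H = sets borel" unfolding H_def by (simp add: sets_mix)
  have sets: "sets F = sets H" unfolding H_def by (simp add: sF sets_mix)
  have muH: "mu H = a * mu F + (1 - a) * mu G" unfolding H_def by (rule mu_mix[OF sF sG IF IG IH a])
  have muHm: "mu H \<le> m" unfolding muH m_def using a mu_nonneg[of F] mu_nonneg[of G]
  proof -
    have "a * mu F \<le> mu F" using a mu_nonneg[of F] by (simp add: mult_left_le_one_le)
    moreover have "(1 - a) * mu G \<le> mu G" using a mu_nonneg[of G] by (simp add: mult_left_le_one_le)
    ultimately show "a * mu F + (1 - a) * mu G \<le> mu F + mu G" by linarith
  qed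
  have depf: "\<And>w w'. stake K w = stake K w' \<Longrightarrow> f w = f w'"
    unfolding f_def by (intro sum.cong refl tt_dep) auto
  have depB: "\<And>w w'. stake K w = stake K w' \<Longrightarrow> B w = B w'"
    unfolding B_def by (intro sum.cong refl bb_dep) auto
  have fB: "\<And>w. f w \<le> B w" unfolding f_def B_def by (intro sum_mono tt_le_bb[OF d(1) p h b])
  have Bm: "B \<in> borel_measurable (stream_space F)"
  proof -
    have [measurable]: "\<And>k. bb \<delta> h k \<in> borel_measurable (stream_space F)" by (rule bb_meas[OF sF])
    show ?thesis unfolding B_def by measurable
  qed
  have mixH: "\<And>\<phi>. \<phi> \<in> borel_measurable F \<Longrightarrow> ennreal a * integral\<^sup>N F \<phi> \<le> integral\<^sup>N H \<phi>"
    unfolding H_def by (rule mix_ge[OF sF sG])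
  have L: "integral\<^sup>N (stream_space H) f + ennreal a ^ K * integral\<^sup>N (stream_space F) B
     \<le> ennreal a ^ K * integral\<^sup>N (stream_space F) f + integral\<^sup>N (stream_space H) B"
    by (rule mix_lower_le[OF PF PH[folded H_def] sets mixH depf Bm depB fB])
  define BF where "BF = (\<Sum>k<K. cc \<delta> h (mu F) k)"
  define BH where "BH = (\<Sum>k<K. cc \<delta> h (mu H) k)"
  have iBF: "integral\<^sup>N (stream_space F) B = ennreal BF"
    unfolding B_def BF_def by (rule int_B[OF PF sF IF d(1) b])
  have iBH: "integral\<^sup>N (stream_space H) B = ennreal BH"
    unfolding B_def BH_def by (rule int_B[OF PH[folded H_def] sH IH[folded H_def] d(1) b])
  have BF0: "0 \<le> BF" unfolding BF_def using cc_nonneg[OF d(1) b mu_nonneg] by (simp add: sum_nonneg)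
  have BH0: "0 \<le> BH" unfolding BH_def using cc_nonneg[OF d(1) b mu_nonneg] by (simp add: sum_nonneg)
  have finU: "U \<delta> p F h < \<top>" using U_le_tot[OF PF sF IF d p h b] by (simp add: le_less_trans)
  define uF where "uF = enn2real (U \<delta> p F h)"
  have UF: "U \<delta> p F h = ennreal uF" unfolding uF_def using finU by simp
  have uF0: "0 \<le> uF" unfolding uF_def by simp
  have aK0: "0 \<le> a ^ K" and aK1: "a ^ K \<le> 1" using a by (auto simp: power_le_one)
  have fF: "integral\<^sup>N (stream_space F) f \<le> ennreal uF" unfolding f_def UF[symmetric] by (rule trunc_le_U)
  define X where "X = integral\<^sup>N (stream_space H) f"
  have L2: "X + ennreal (a ^ K * BF) \<le> ennreal (a ^ K * uF + BH)"
  proof -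
    have "X + ennreal (a ^ K * BF) = integral\<^sup>N (stream_space H) f + ennreal a ^ K * integral\<^sup>N (stream_space F) B"
      unfolding X_def iBF using a BF0 by (simp add: ennreal_mult' ennreal_power)
    also have "\<dots> \<le> ennreal a ^ K * integral\<^sup>N (stream_space F) f + integral\<^sup>N (stream_space H) B" by (rule L)
    also have "\<dots> \<le> ennreal a ^ K * ennreal uF + ennreal BH" unfolding iBH
      by (intro add_right_mono mult_left_mono fF) auto
    also have "\<dots> = ennreal (a ^ K * uF + BH)" using a uF0 BH0 aK0
      by (simp add: ennreal_mult' ennreal_power ennreal_plus)
    finally show ?thesis .
  qed
  have Xfin: "X < \<top>"
  proof -
    have "X \<le> X + ennreal (a ^ K * BF)" by simp
    also note L2
    also have "ennreal (a ^ K * uF + BH) < \<top>" by simp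
    finally show ?thesis .
  qed
  define x where "x = enn2real X"
  have Xx: "X = ennreal x" unfolding x_def using Xfin by simp
  have x0: "0 \<le> x" unfolding x_def by simp
  have xle: "x + a ^ K * BF \<le> a ^ K * uF + BH"
  proof -
    have e: "ennreal x + ennreal (a ^ K * BF) = ennreal (x + a ^ K * BF)"
      by (rule ennreal_plus[symmetric]) (use x0 aK0 BF0 in auto)
    from L2 have "ennreal (x + a ^ K * BF) \<le> ennreal (a ^ K * uF + BH)" unfolding Xx e .
    then show ?thesis using aK0 uF0 BH0 by (subst (asm) ennreal_le_iff) auto
  qed
  have diff: "BH - a ^ K * BF \<le> (1 - a ^ K) * C"
    unfolding BH_def BF_def C_def muH m_def
    by (rule B_mix_diff[OF d b a mu_nonneg mu_nonneg])
  have tH: "(\<Sum>j. cc \<delta> h (mu H) (j + K)) \<le> \<tau>" unfolding \<tau>_def by (rule tail_mono_m[OF d muHm])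
  have "U \<delta> p H h \<le> X + ennreal (\<Sum>j. cc \<delta> h (mu H) (j + K))"
    unfolding X_def f_def by (rule U_split[OF PH[folded H_def] sH IH[folded H_def] d p h b])
  also have "\<dots> \<le> ennreal x + ennreal \<tau>" unfolding Xx by (intro add_left_mono ennreal_leI tH)
  also have "\<dots> = ennreal (x + \<tau>)"
  proof -
    have "0 \<le> \<tau>" unfolding \<tau>_def m_def using cc_nonneg[OF d(1) b] summable_cc[OF d] summable_iff_shift
      mu_nonneg[of F] mu_nonneg[of G] by (intro suminf_nonneg) auto
    then show ?thesis using x0 by (simp add: ennreal_plus)
  qed
  also have "\<dots> \<le> ennreal (uF + (1 - a ^ K) * C + \<tau>)"
  proof (rule ennreal_leI)
    have "a ^ K * uF \<le> uF" using aK1 aK0 uF0 by (simp add: mult_left_le_one_le)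
    then show "x + \<tau> \<le> uF + (1 - a ^ K) * C + \<tau>" using xle diff by linarith
  qed
  finally show ?thesis unfolding H_def uF_def C_def \<tau>_def m_def .
qed

lemma consistent_mix:
  assumes sF: "sets F = sets borel" and sG: "sets G = sets borel"
    and c: "consistent G h" and a: "0 \<le> a" "a < 1"
  shows "consistent (mix a F G) h"
proof -
  have "\<And>l. 0 < (\<Prod>x\<leftarrow>l. emeasure G {x}) \<Longrightarrow> 0 < (\<Prod>x\<leftarrow>l. emeasure (mix a F G) {x})"
  proof -
    fix l :: "real list"
    show "0 < (\<Prod>x\<leftarrow>l. emeasure G {x}) \<Longrightarrow> 0 < (\<Prod>x\<leftarrow>l. emeasure (mix a F G) {x})"
    proof (induction l)
      case Nil
      then show ?case by simp
    next
      case (Cons y l)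
      then have gy: "0 < emeasure G {y}" and rest: "0 < (\<Prod>x\<leftarrow>l. emeasure G {x})"
        by (auto simp: ennreal_zero_less_mult_iff)
      have "0 < ennreal (1 - a) * emeasure G {y}"
        using gy a by (simp add: ennreal_zero_less_mult_iff)
      also have "\<dots> \<le> emeasure (mix a F G) {y}"
        by (simp add: emeasure_mix[OF sF sG])
      finally have "0 < emeasure (mix a F G) {y}" .
      then show ?case using Cons.IH[OF rest] by (simp add: ennreal_zero_less_mult_iff)
    qed
  qed
  then show ?thesis using c unfolding consistent_def by blast
qed

lemma key:
  fixes \<delta> :: real and h :: "real list" and \<F> :: "real measure set"
  assumes d: "0 < \<delta>" "\<delta> < 1" and h: "h \<noteq> []" and b: "0 < best h"
    and FF: "\<F> \<subseteq> environments X" and cvx: "convex_envs \<F>"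
    and p: "decision_rule p"
    and ne: "{F \<in> \<F>. consistent F h} \<noteq> {}"
    and F: "F \<in> \<F>"
  shows "(INF H \<in> {F \<in> \<F>. consistent F h}. U \<delta> p H h / V \<delta> H h) \<le> U \<delta> p F h / V \<delta> F h"
proof -
  have d0: "0 \<le> \<delta>" using d by simp
  have b0: "0 \<le> best h" using b by simp
  obtain G where G: "G \<in> \<F>" "consistent G h" using ne by blast
  have envF: "sets F = sets borel" "prob_space F" "integrable F (\<lambda>x. x)"
    using FF F unfolding environments_def by auto
  have envG: "sets G = sets borel" "prob_space G" "integrable G (\<lambda>x. x)"
    using FF G(1) unfolding environments_def by auto
  define m where "m = mu F + mu G"
  have m0: "0 \<le> m" unfolding m_def using mu_nonneg[of F] mu_nonneg[of G] by simp
  have mF: "mu F \<le> m" unfolding m_def using mu_nonneg[of G] by simp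
  define C where "C = (\<Sum>k. cc \<delta> h m k)"
  define \<tau> where "\<tau> = (\<lambda>K. \<Sum>j. cc \<delta> h m (j + K))"
  have C0: "0 \<le> C" unfolding C_def using cc_nonneg[OF d0 b0 m0] summable_cc[OF d0 d(2)]
    by (intro suminf_nonneg) auto
  have \<tau>lim: "\<tau> \<longlonglongrightarrow> 0" unfolding \<tau>_def by (rule suminf_exist_split2[OF summable_cc[OF d0 d(2)]])
  have Vfin: "V \<delta> F h < \<top>"
    using V_le_tot[OF envF(2) envF(1) envF(3) d0 d(2) h b0] by (simp add: le_less_trans)
  define vF where "vF = enn2real (V \<delta> F h)"
  have VF: "V \<delta> F h = ennreal vF" unfolding vF_def using Vfin by simp
  have vFn: "0 \<le> vF" unfolding vF_def by simp
  have vFb: "best h \<le> vF" using V_ge_best[OF envF(2), of h \<delta>] VF b0 ennreal_le_iff[OF vFn] by simp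
  have vF0: "0 < vF" using vFb b by simp
  have Ufin: "U \<delta> p F h < \<top>"
    using U_le_tot[OF envF(2) envF(1) envF(3) d0 d(2) p h b0] by (simp add: le_less_trans)
  define uF where "uF = enn2real (U \<delta> p F h)"
  have UF: "U \<delta> p F h = ennreal uF" unfolding uF_def using Ufin by simp
  have uF0: "0 \<le> uF" unfolding uF_def by simp
  define r where "r = (\<lambda>n. inverse (real (Suc (Suc n))))"
  have r0: "\<And>n. 0 < r n" unfolding r_def by simp
  have r1: "\<And>n. r n \<le> 1 / 2" unfolding r_def by (simp add: field_simps)
  define e where "e = (\<lambda>n. vF * r n / 4)"
  have e0: "\<And>n. 0 < e n" unfolding e_def using vF0 r0 by simp
  have e1: "\<And>n. e n \<le> vF / 8"
  proof -
    fix n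
    have "vF * r n \<le> vF * (1/2)" using r1[of n] vF0 by (intro mult_left_mono) auto
    then show "e n \<le> vF / 8" unfolding e_def by simp
  qed
  have ex1: "\<forall>n. \<exists>q. decision_rule q \<and> vF - e n \<le> enn2real (U \<delta> q F h)"
  proof
    fix n
    have "ennreal (vF - e n) < V \<delta> F h" unfolding VF using e0[of n] vF0 by (simp add: ennreal_lessI)
    then obtain q where q: "decision_rule q" "ennreal (vF - e n) < U \<delta> q F h"
      unfolding V_def by (auto simp: less_SUP_iff)
    have Uq: "U \<delta> q F h < \<top>"
      using U_le_tot[OF envF(2) envF(1) envF(3) d0 d(2) q(1) h b0] by (simp add: le_less_trans)
    have "vF - e n = enn2real (ennreal (vF - e n))" using e1[of n] vF0 by simp
    also have "\<dots> \<le> enn2real (U \<delta> q F h)" using q(2) Uq by (intro enn2real_mono) auto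
    finally show "\<exists>q. decision_rule q \<and> vF - e n \<le> enn2real (U \<delta> q F h)" using q(1) by blast
  qed
  obtain qq where qq0: "\<forall>n. decision_rule (qq n) \<and> vF - e n \<le> enn2real (U \<delta> (qq n) F h)"
    using choice[OF ex1] by blast
  have qq: "\<And>n. decision_rule (qq n)" "\<And>n. vF - e n \<le> enn2real (U \<delta> (qq n) F h)"
    using qq0 by auto
  have ex2: "\<forall>n. \<exists>K. 1 \<le> K \<and> \<tau> K \<le> e n"
  proof
    fix n
    have "eventually (\<lambda>K. \<tau> K < e n) sequentially" by (rule order_tendstoD(2)[OF \<tau>lim e0])
    then obtain N where N: "\<And>K. K \<ge> N \<Longrightarrow> \<tau> K < e n" by (auto simp: eventually_sequentially)
    show "\<exists>K. 1 \<le> K \<and> \<tau> K \<le> e n" using N[of "max 1 N"] by (intro exI[of _ "max 1 N"]) auto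
  qed
  obtain KK where KK0: "\<forall>n. 1 \<le> KK n \<and> \<tau> (KK n) \<le> e n"
    using choice[OF ex2] by blast
  have KK: "\<And>n. 1 \<le> KK n" "\<And>n. \<tau> (KK n) \<le> e n" using KK0 by auto
  define a where "a = (\<lambda>n. 1 - r n / real (KK n))"
  have a0: "\<And>n. 0 \<le> a n" and a1: "\<And>n. a n < 1"
  proof -
    fix n
    have K1: "1 \<le> real (KK n)" using KK(1)[of n] by simp
    have "r n / real (KK n) \<le> r n" using K1 r0[of n] by (simp add: divide_le_eq)
    then show "0 \<le> a n" unfolding a_def using r1[of n] by simp
    show "a n < 1" unfolding a_def using r0[of n] K1 by simp
  qed
  have aK: "\<And>n. 1 - r n \<le> a n ^ KK n"
  proof -
    fix n
    have K1: "1 \<le> real (KK n)" using KK(1)[of n] by simp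
    have "r n / real (KK n) \<le> r n" using K1 r0[of n] by (simp add: divide_le_eq)
    then have "- 1 \<le> - (r n / real (KK n))" using r1[of n] by simp
    from Bernoulli_inequality[OF this, of "KK n"]
    have "1 + real (KK n) * - (r n / real (KK n)) \<le> (1 + - (r n / real (KK n))) ^ KK n" by simp
    moreover have "1 + real (KK n) * - (r n / real (KK n)) = 1 - r n" using K1 by simp
    ultimately show "1 - r n \<le> a n ^ KK n" unfolding a_def by simp
  qed
  define H where "H = (\<lambda>n. mix (a n) F G)"
  have HF: "\<And>n. H n \<in> \<F>" unfolding H_def using cvx F G(1) a0 a1
    unfolding convex_envs_def by (simp add: less_imp_le)
  have envH: "\<And>n. sets (H n) = sets borel \<and> prob_space (H n) \<and> integrable (H n) (\<lambda>x. x)"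
    using FF HF unfolding environments_def by auto
  have Hc: "\<And>n. consistent (H n) h"
    unfolding H_def by (rule consistent_mix[OF envF(1) envG(1) G(2) a0 a1])
  define N where "N = (\<lambda>n. uF + r n * C + e n)"
  define D where "D = (\<lambda>n. (1 - r n) * (vF - 2 * e n))"
  have D0: "\<And>n. 0 < D n"
  proof -
    fix n show "0 < D n" unfolding D_def using r1[of n] e1[of n] vF0 by (intro mult_pos_pos) auto
  qed
  have bound: "\<And>n. U \<delta> p (H n) h / V \<delta> (H n) h \<le> ennreal (N n / D n)"
  proof -
    fix n
    have PH: "prob_space (H n)" and IH: "integrable (H n) (\<lambda>x. x)" and sH: "sets (H n) = sets borel"
      using envH[of n] by auto
    have aKn1: "a n ^ KK n \<le> 1" using a0[of n] a1[of n] by (simp add: power_le_one)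
    have up: "U \<delta> p (H n) h \<le> ennreal (N n)"
    proof -
      have "U \<delta> p (H n) h \<le> ennreal (uF + (1 - a n ^ KK n) * C + \<tau> (KK n))"
        using U_mix_upper[OF envF(2) envF(1) envF(3) envG(1) envG(3) PH[unfolded H_def] IH[unfolded H_def]
            d0 d(2) h b0 a0[of n] less_imp_le[OF a1[of n]] p, of "KK n"]
        unfolding H_def uF_def C_def \<tau>_def m_def by simp
      also have "\<dots> \<le> ennreal (N n)"
      proof (rule ennreal_leI)
        have "(1 - a n ^ KK n) * C \<le> r n * C" using aK[of n] C0 by (intro mult_right_mono) auto
        then show "uF + (1 - a n ^ KK n) * C + \<tau> (KK n) \<le> N n" unfolding N_def using KK(2)[of n] by simp
      qed
      finally show ?thesis .
    qed
    have low: "ennreal (D n) \<le> V \<delta> (H n) h"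
    proof -
      have "D n \<le> a n ^ KK n * (enn2real (U \<delta> (qq n) F h) - \<tau> (KK n))"
        unfolding D_def
      proof (rule mult_mono)
        show "1 - r n \<le> a n ^ KK n" by (rule aK)
        show "vF - 2 * e n \<le> enn2real (U \<delta> (qq n) F h) - \<tau> (KK n)" using qq(2)[of n] KK(2)[of n] by simp
        show "0 \<le> a n ^ KK n" using a0[of n] by simp
        show "0 \<le> vF - 2 * e n" using e1[of n] vF0 by simp
      qed
      then have "ennreal (D n) \<le> ennreal (a n ^ KK n * (enn2real (U \<delta> (qq n) F h) - \<tau> (KK n)))"
        by (rule ennreal_leI)
      also have "\<dots> \<le> V \<delta> (H n) h"
        using V_mix_lower[OF envF(2) envF(1) envF(3) envG(1) PH[unfolded H_def] d0 d(2) h b0 a0[of n] qq(1)[of n] mF, of "KK n"]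
        unfolding H_def \<tau>_def by simp
      finally show ?thesis .
    qed
    have UHfin: "U \<delta> p (H n) h < \<top>" using up by (simp add: le_less_trans)
    have VHfin: "V \<delta> (H n) h < \<top>"
      using V_le_tot[OF PH sH IH d0 d(2) h b0] by (simp add: le_less_trans)
    define uH where "uH = enn2real (U \<delta> p (H n) h)"
    define vH where "vH = enn2real (V \<delta> (H n) h)"
    have UH: "U \<delta> p (H n) h = ennreal uH" unfolding uH_def using UHfin by simp
    have VH: "V \<delta> (H n) h = ennreal vH" unfolding vH_def using VHfin by simp
    have N0: "0 \<le> N n" unfolding N_def using uF0 r0[of n] C0 e0[of n] by simp
    have uHN: "uH \<le> N n" using up ennreal_le_iff[OF N0] unfolding UH by simp
    have vH0: "0 \<le> vH" unfolding vH_def by simp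
    have DvH: "D n \<le> vH" using low ennreal_le_iff[OF vH0] unfolding VH by simp
    have "U \<delta> p (H n) h / V \<delta> (H n) h = ennreal (uH / vH)"
      unfolding UH VH using D0[of n] DvH by (subst divide_ennreal) (auto simp: uH_def)
    also have "\<dots> \<le> ennreal (N n / D n)"
      by (rule ennreal_leI, rule frac_le) (use N0 uHN D0[of n] DvH in auto)
    finally show "U \<delta> p (H n) h / V \<delta> (H n) h \<le> ennreal (N n / D n)" .
  qed
  have INFle: "\<And>n. (INF H \<in> {F \<in> \<F>. consistent F h}. U \<delta> p H h / V \<delta> H h) \<le> ennreal (N n / D n)"
  proof -
    fix n
    have "(INF H \<in> {F \<in> \<F>. consistent F h}. U \<delta> p H h / V \<delta> H h) \<le> U \<delta> p (H n) h / V \<delta> (H n) h"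
      using HF[of n] Hc[of n] by (intro INF_lower) auto
    also note bound[of n]
    finally show "(INF H \<in> {F \<in> \<F>. consistent F h}. U \<delta> p H h / V \<delta> H h) \<le> ennreal (N n / D n)" .
  qed
  have rlim: "r \<longlonglongrightarrow> 0"
    unfolding r_def using LIMSEQ_Suc[OF LIMSEQ_inverse_real_of_nat] by simp
  have Nlim: "N \<longlonglongrightarrow> uF"
  proof -
    have "N \<longlonglongrightarrow> uF + 0 * C + vF * 0 / 4" unfolding N_def e_def by (intro tendsto_intros rlim) simp_all
    then show ?thesis by simp
  qed
  have Dlim: "D \<longlonglongrightarrow> vF"
  proof -
    have "D \<longlonglongrightarrow> (1 - 0) * (vF - 2 * (vF * 0 / 4))" unfolding D_def e_def by (intro tendsto_intros rlim) simp_all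
    then show ?thesis by simp
  qed
  have "(\<lambda>n. N n / D n) \<longlonglongrightarrow> uF / vF" using Nlim Dlim vF0 by (intro tendsto_divide) auto
  then have "(\<lambda>n. ennreal (N n / D n)) \<longlonglongrightarrow> ennreal (uF / vF)" by (rule tendsto_ennrealI)
  then have "(INF H \<in> {F \<in> \<F>. consistent F h}. U \<delta> p H h / V \<delta> H h) \<le> ennreal (uF / vF)"
    by (rule LIMSEQ_le_const) (use INFle in auto)
  also have "ennreal (uF / vF) = U \<delta> p F h / V \<delta> F h"
    unfolding UF VF using uF0 vF0 by (simp add: divide_ennreal)
  finally show ?thesis .
qed

theorem proposition2:
  fixes \<delta> x0 :: real and X :: "real set" and \<F> :: "real measure set"
    and p :: "real list \<Rightarrow> real" and xs :: "real list"
  assumes "0 < \<delta>" and "\<delta> < 1"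
    and "X \<in> sets borel" and "X \<subseteq> {0..}" and "0 \<in> X" and "x0 > 0"
    and "\<F> \<subseteq> environments X" and "convex_envs \<F>"
    and "decision_rule p"
    and "set xs \<subseteq> X"
    and "{F \<in> \<F>. consistent F (x0 # xs)} \<noteq> {}"
  shows "(INF F \<in> {F \<in> \<F>. consistent F (x0 # xs)}. U \<delta> p F (x0 # xs) / V \<delta> F (x0 # xs))
       = (INF F \<in> \<F>. U \<delta> p F (x0 # xs) / V \<delta> F (x0 # xs))"
proof -
  have h: "x0 # xs \<noteq> []" by simp
  have "x0 \<le> best (x0 # xs)" unfolding best_def by simp
  then have b: "0 < best (x0 # xs)" using assms(6) by linarith
  show ?thesis
  proof (rule antisym)
    show "(INF F \<in> {F \<in> \<F>. consistent F (x0 # xs)}. U \<delta> p F (x0 # xs) / V \<delta> F (x0 # xs))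
       \<le> (INF F \<in> \<F>. U \<delta> p F (x0 # xs) / V \<delta> F (x0 # xs))"
      by (rule INF_greatest) (rule key[OF assms(1,2) h b assms(7,8,9,11)])
    show "(INF F \<in> \<F>. U \<delta> p F (x0 # xs) / V \<delta> F (x0 # xs))
       \<le> (INF F \<in> {F \<in> \<F>. consistent F (x0 # xs)}. U \<delta> p F (x0 # xs) / V \<delta> F (x0 # xs))"
      by (rule INF_superset_mono) auto
  qed
qed

end
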